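(* Let $X$ be a finite set with $|X|\geq 3$ and let $N,N'$ be binary level-1 networks on $X$ with $\mathcal R(N)\subseteq\mathcal R(N')$. Let $v$ be a split vertex of $N$ that is the head of a cut arc of $N$, and $v'$ a split vertex of $N'$ that is the head of a cut arc of $N'$. Then $C_N(v)$ and $C_{N'}(v')$ are compatible, i.e. $C_N(v)\cap C_{N'}(v')\in\{\emptyset,C_N(v),C_{N'}(v')\}$. Moreover, if $C_N(v)\subsetneq C_{N'}(v')$, then $C_N(v)$ is not a maximal SN-set of $\mathcal R(N)$.
   Context: A leaf of a DAG is a vertex of in-degree 1 and out-degree 0. For a finite set $X$, a phylogenetic network on $X$ is a DAG (no loops, no multiple arcs) with a unique vertex (the root) of in-degree 0, which has out-degree at least 2, whose set of leaves is $X$, and in which every other non-leaf vertex is either a split vertex (in-degree 1, out-degree $\geq 2$) or a hybrid vertex (in-degree $\geq 2$, out-degree $\geq 1$). It is binary if the root and all split vertices have out-degree 2 and every hybrid vertex has in-degree 2 and out-degree 1. $U(N)$ denotes the underlying undirected graph. A binary level-1 network is a binary phylogenetic network in which every biconnected component of $U(N)$ contains at most one hybrid vertex; by standing convention every cycle of $U(N)$ has at least four vertices. An arc is a cut arc if deleting it disconnects $U(N)$. For a vertex $v$, $C_N(v)$ is the set of leaves reachable from $v$ by a directed path. For distinct $a,b,c\in X$, the triplet $ab|c$ is consistent with $N$ if there exist distinct vertices $v,w$ of $N$ and directed paths from $v$ to $c$, from $v$ to $w$, from $w$ to $a$ and from $w$ to $b$ such that no two of these paths share an interior vertex; $\mathcal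 R(N)$ is the set of all triplets consistent with $N$. For a set $\mathcal R$ of triplets on $X$, a subset $S\subseteq X$ is an SN-set of $\mathcal R$ if there is no triplet $xy|z\in\mathcal R$ with $x,z\in S$ and $y\notin S$; it is non-trivial if $S\neq X$, and a non-trivial SN-set is maximal if no non-trivial SN-set strictly contains it. *)

theory Defs
  imports Main
begin

text \<open>A directed graph is given by a vertex set V and an arc set A of ordered pairs
  (so multiple arcs are impossible).\<close>

definition in_deg :: "('v \<times> 'v) set \<Rightarrow> 'v \<Rightarrow> nat" where
  "in_deg A v = card {u. (u, v) \<in> A}"

definition out_deg :: "('v \<times> 'v) set \<Rightarrow> 'v \<Rightarrow> nat" where
  "out_deg A v = card {w. (v, w) \<in> A}"

definition is_dag :: "'v set \<Rightarrow> ('v \<times> 'v) set \<Rightarrow> bool" where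
  "is_dag V A \<longleftrightarrow> finite V \<and> A \<subseteq> V \<times> V \<and> (\<forall>x. (x, x) \<notin> A\<^sup>+)"

definition is_leaf :: "('v \<times> 'v) set \<Rightarrow> 'v \<Rightarrow> bool" where
  "is_leaf A v \<longleftrightarrow> in_deg A v = 1 \<and> out_deg A v = 0"

definition is_split :: "('v \<times> 'v) set \<Rightarrow> 'v \<Rightarrow> bool" where
  "is_split A v \<longleftrightarrow> in_deg A v = 1 \<and> out_deg A v \<ge> 2"

definition is_hybrid :: "('v \<times> 'v) set \<Rightarrow> 'v \<Rightarrow> bool" where
  "is_hybrid A v \<longleftrightarrow> in_deg A v \<ge> 2 \<and> out_deg A v \<ge> 1"

definition phylo_net :: "'v set \<Rightarrow> ('v \<times> 'v) set \<Rightarrow> 'v set \<Rightarrow> bool" where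
  "phylo_net V A X \<longleftrightarrow> is_dag V A \<and>
     (\<exists>r\<in>V. in_deg A r = 0 \<and> out_deg A r \<ge> 2 \<and> (\<forall>u\<in>V. in_deg A u = 0 \<longrightarrow> u = r) \<and>
        (\<forall>u\<in>V. u \<noteq> r \<and> \<not> is_leaf A u \<longrightarrow> is_split A u \<or> is_hybrid A u)) \<and>
     {u \<in> V. is_leaf A u} = X"

definition binary_net :: "'v set \<Rightarrow> ('v \<times> 'v) set \<Rightarrow> 'v set \<Rightarrow> bool" where
  "binary_net V A X \<longleftrightarrow> phylo_net V A X \<and>
     (\<forall>u\<in>V. in_deg A u = 0 \<longrightarrow> out_deg A u = 2) \<and>
     (\<forall>u\<in>V. is_split A u \<longrightarrow> out_deg A u = 2) \<and>
     (\<forall>u\<in>V. is_hybrid A u \<longrightarrow> in_deg A u = 2 \<and> out_deg A u = 1)"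

definition uedges :: "('v \<times> 'v) set \<Rightarrow> ('v \<times> 'v) set" where
  "uedges A = A \<union> A\<inverse>"

definition connected_on :: "('v \<times> 'v) set \<Rightarrow> 'v set \<Rightarrow> bool" where
  "connected_on E S \<longleftrightarrow> (\<forall>x\<in>S. \<forall>y\<in>S. (x, y) \<in> (E \<inter> (S \<times> S))\<^sup>*)"

text \<open>Vertex set of a biconnected (sub)graph: at least two vertices, connected, and
  stays connected after deleting any single vertex (a single edge counts as biconnected).\<close>
definition biconnected_on :: "('v \<times> 'v) set \<Rightarrow> 'v set \<Rightarrow> bool" where
  "biconnected_on E S \<longleftrightarrow> finite S \<and> card S \<ge> 2 \<and> connected_on E S \<and>
     (\<forall>x\<in>S. connected_on E (S - {x}))"

definition biconnected_component :: "'v set \<Rightarrow> ('v \<times> 'v) set \<Rightarrow> 'v set \<Rightarrow> bool" where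
  "biconnected_component V E S \<longleftrightarrow> S \<subseteq> V \<and> biconnected_on E S \<and>
     (\<forall>T. S \<subset> T \<and> T \<subseteq> V \<longrightarrow> \<not> biconnected_on E T)"

definition binary_level1_net :: "'v set \<Rightarrow> ('v \<times> 'v) set \<Rightarrow> 'v set \<Rightarrow> bool" where
  "binary_level1_net V A X \<longleftrightarrow> binary_net V A X \<and>
     (\<forall>S. biconnected_component V (uedges A) S \<longrightarrow> card {h \<in> S. is_hybrid A h} \<le> 1) \<and>
     \<comment> \<open>standing convention: every cycle of U(N) has at least four vertices (no triangles)\<close>
     (\<forall>x y z. (x, y) \<in> uedges A \<and> (y, z) \<in> uedges A \<and> (z, x) \<in> uedges A \<longrightarrow>
        \<not> (x \<noteq> y \<and> y \<noteq> z \<and> x \<noteq> z))"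

definition cut_arc :: "'v set \<Rightarrow> ('v \<times> 'v) set \<Rightarrow> 'v \<times> 'v \<Rightarrow> bool" where
  "cut_arc V A e \<longleftrightarrow> e \<in> A \<and> \<not> connected_on (uedges (A - {e})) V"

definition cluster :: "('v \<times> 'v) set \<Rightarrow> 'v set \<Rightarrow> 'v \<Rightarrow> 'v set" where
  "cluster A X v = {x \<in> X. (v, x) \<in> A\<^sup>*}"

definition dpath :: "('v \<times> 'v) set \<Rightarrow> 'v \<Rightarrow> 'v \<Rightarrow> 'v list \<Rightarrow> bool" where
  "dpath A s t p \<longleftrightarrow> p \<noteq> [] \<and> hd p = s \<and> last p = t \<and>
     (\<forall>i. Suc i < length p \<longrightarrow> (p ! i, p ! Suc i) \<in> A)"

definition interior :: "'v list \<Rightarrow> 'v set" where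
  "interior p = set (butlast (tl p))"

text \<open>Triplet ab|c, represented as (a,b,c), is consistent with N.\<close>
definition triplet_consistent :: "'v set \<Rightarrow> ('v \<times> 'v) set \<Rightarrow> 'v \<Rightarrow> 'v \<Rightarrow> 'v \<Rightarrow> bool" where
  "triplet_consistent V A a b c \<longleftrightarrow>
     (\<exists>v\<in>V. \<exists>w\<in>V. \<exists>pc pw pa pb. v \<noteq> w \<and>
        dpath A v c pc \<and> dpath A v w pw \<and> dpath A w a pa \<and> dpath A w b pb \<and>
        interior pc \<inter> interior pw = {} \<and> interior pc \<inter> interior pa = {} \<and>
        interior pc \<inter> interior pb = {} \<and> interior pw \<inter> interior pa = {} \<and>
        interior pw \<inter> interior pb = {} \<and> interior pa \<inter> interior pb = {})"

definition triplets :: "'v set \<Rightarrow> ('v \<times> 'v) set \<Rightarrow> 'v set \<Rightarrow> ('v \<times> 'v \<times> 'v) set" where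
  "triplets V A X = {(a, b, c). a \<in> X \<and> b \<in> X \<and> c \<in> X \<and> a \<noteq> b \<and> a \<noteq> c \<and> b \<noteq> c \<and>
     triplet_consistent V A a b c}"

definition SN_set :: "('v \<times> 'v \<times> 'v) set \<Rightarrow> 'v set \<Rightarrow> 'v set \<Rightarrow> bool" where
  "SN_set R X S \<longleftrightarrow> S \<subseteq> X \<and> \<not> (\<exists>x y z. (x, y, z) \<in> R \<and> x \<in> S \<and> z \<in> S \<and> y \<notin> S)"

definition maximal_SN_set :: "('v \<times> 'v \<times> 'v) set \<Rightarrow> 'v set \<Rightarrow> 'v set \<Rightarrow> bool" where
  "maximal_SN_set R X S \<longleftrightarrow> SN_set R X S \<and> S \<noteq> X \<and>
     \<not> (\<exists>T. SN_set R X T \<and> T \<noteq> X \<and> S \<subset> T)"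

end

theory Submission
  imports Defs
begin


lemma dpath_Cons:
  "dpath A s t (x#p) \<longleftrightarrow> x = s \<and> (p = [] \<longrightarrow> s = t) \<and> (p \<noteq> [] \<longrightarrow> (s, hd p) \<in> A \<and> dpath A (hd p) t p)"
proof (cases p)
  case Nil then show ?thesis by (auto simp: dpath_def)
next
  case (Cons y q)
  show ?thesis
  proof
    assume H: "dpath A s t (x#p)"
    have "(x, y) \<in> A" using H Cons unfolding dpath_def by (metis Suc_less_eq length_Cons nth_Cons_0 nth_Cons_Suc zero_less_Suc)
    moreover have "\<forall>i. Suc i < length p \<longrightarrow> (p ! i, p ! Suc i) \<in> A"
      using H unfolding dpath_def by (metis Suc_less_eq length_Cons nth_Cons_Suc)
    ultimately show "x = s \<and> (p = [] \<longrightarrow> s = t) \<and> (p \<noteq> [] \<longrightarrow> (s, hd p) \<in> A \<and> dpath A (hd p) t p)"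
      using H Cons unfolding dpath_def by auto
  next
    assume H: "x = s \<and> (p = [] \<longrightarrow> s = t) \<and> (p \<noteq> [] \<longrightarrow> (s, hd p) \<in> A \<and> dpath A (hd p) t p)"
    have "\<forall>i. Suc i < length (x#p) \<longrightarrow> ((x#p) ! i, (x#p) ! Suc i) \<in> A"
    proof (intro allI impI)
      fix i assume "Suc i < length (x#p)"
      then show "((x#p) ! i, (x#p) ! Suc i) \<in> A"
        using H Cons unfolding dpath_def by (cases i) auto
    qed
    then show "dpath A s t (x#p)" using H Cons unfolding dpath_def by auto
  qed
qed

lemma rtrancl_dpath: "(s,t) \<in> A\<^sup>* \<Longrightarrow> \<exists>p. dpath A s t p"
proof (induction rule: converse_rtrancl_induct)
  case base then show ?case by (rule exI[of _ "[t]"]) (auto simp: dpath_def)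
next
  case (step y z)
  then obtain p where "dpath A z t p" by blast
  moreover have "p \<noteq> []" "hd p = z" using \<open>dpath A z t p\<close> by (auto simp: dpath_def)
  ultimately have "dpath A y t (y#p)" using step by (simp add: dpath_Cons)
  then show ?case by blast
qed

lemma dpath_set: "dpath A s t p \<Longrightarrow> x \<in> set p \<Longrightarrow> (s,x) \<in> A\<^sup>* \<and> (x,t) \<in> A\<^sup>*"
proof (induction p arbitrary: s x)
  case Nil then show ?case by (simp add: dpath_def)
next
  case (Cons y q)
  show ?case
  proof (cases "q = []")
    case True then show ?thesis using Cons.prems by (auto simp: dpath_Cons)
  next
    case False
    then have a: "(s, hd q) \<in> A" "dpath A (hd q) t q" "y = s" using Cons.prems by (auto simp: dpath_Cons)
    have "(hd q, t) \<in> A\<^sup>*" using Cons.IH[OF a(2) hd_in_set[OF False]] by simp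
    then show ?thesis using Cons.prems a Cons.IH[OF a(2)]
      by (auto intro: converse_rtrancl_into_rtrancl)
  qed
qed

lemma dpath_tl: assumes H: "dpath A s t p" "x \<in> set (tl p)" shows "(s,x) \<in> A\<^sup>+"
proof (cases p)
  case Nil then show ?thesis using H by simp
next
  case (Cons y q)
  then have "q \<noteq> []" using Cons H by auto
  then have a: "(s, hd q) \<in> A" "dpath A (hd q) t q" using H Cons by (auto simp: dpath_Cons)
  have "(hd q, x) \<in> A\<^sup>*" using dpath_set[OF a(2)] H Cons by auto
  then show ?thesis using a by (meson rtrancl_into_trancl2)
qed

lemma dpath_butlast: "dpath A s t p \<Longrightarrow> x \<in> set (butlast p) \<Longrightarrow> (x,t) \<in> A\<^sup>+"
proof (induction p arbitrary: s)
  case Nil then show ?case by simp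
next
  case (Cons y q)
  then have q: "q \<noteq> []" by auto
  then have a: "(s, hd q) \<in> A" "dpath A (hd q) t q" "y = s" using Cons.prems by (auto simp: dpath_Cons)
  have "(hd q, t) \<in> A\<^sup>*" using dpath_set[OF a(2)] q by (simp add: hd_in_set)
  then have "(s, t) \<in> A\<^sup>+" using a by (meson rtrancl_into_trancl2)
  then show ?case using Cons q a by auto
qed

lemma dpath_interior: "dpath A s t p \<Longrightarrow> x \<in> interior p \<Longrightarrow> (s,x) \<in> A\<^sup>+ \<and> (x,t) \<in> A\<^sup>+"
  unfolding interior_def
  by (metis butlast_tl dpath_butlast dpath_tl in_set_butlastD list.set_sel(2) tl_Nil)

lemma interiorI: assumes H: "x \<in> set p" "x \<noteq> hd p" "x \<noteq> last p" shows "x \<in> interior p"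
proof (cases p)
  case Nil then show ?thesis using H by simp
next
  case (Cons y q)
  then have "x \<in> set q" "q \<noteq> []" using Cons H by auto
  moreover have "x \<noteq> last q" using H Cons \<open>q \<noteq> []\<close> by auto
  ultimately have "x \<in> set (butlast q)" by (metis append_butlast_last_id butlast_snoc in_set_butlast_appendI rotate1.simps(2) set_ConsD set_rotate1)
  then show ?thesis using Cons by (simp add: interior_def)
qed



locale l1net =
  fixes V :: "'v set" and A :: "('v \<times> 'v) set" and X :: "'v set"
  assumes net: "binary_level1_net V A X"
begin

lemma isdag: "is_dag V A" and leaves: "{u \<in> V. is_leaf A u} = X"
  using net unfolding binary_level1_net_def binary_net_def phylo_net_def by simp_all

lemma phylo: "phylo_net V A X"
  using net unfolding binary_level1_net_def binary_net_def by simp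

lemma lvl1: "biconnected_component V (uedges A) S \<Longrightarrow> card {h \<in> S. is_hybrid A h} \<le> 1"
  using net unfolding binary_level1_net_def by simp

lemma dag: "finite V" "A \<subseteq> V \<times> V" "\<And>x. (x,x) \<notin> A\<^sup>+"
  using isdag unfolding is_dag_def by simp_all

lemma trancl_V: "(x,y) \<in> A\<^sup>+ \<Longrightarrow> x \<in> V \<and> y \<in> V"
  using trancl_subset_Sigma[OF dag(2)] by auto

lemma rtrancl_V: "(x,y) \<in> A\<^sup>* \<Longrightarrow> x \<in> V \<Longrightarrow> y \<in> V"
  using trancl_V by (metis rtrancl_eq_or_trancl)

lemma arc_V: "(x,y) \<in> A \<Longrightarrow> x \<in> V \<and> y \<in> V"
  using dag(2) by auto

lemma fin_par: "finite {u. (u,a) \<in> A}"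
  by (rule finite_subset[OF _ dag(1)]) (auto dest: arc_V)

lemma fin_ch: "finite {u. (a,u) \<in> A}"
  by (rule finite_subset[OF _ dag(1)]) (auto dest: arc_V)

lemma fin_desc: "finite {x. (a,x) \<in> A\<^sup>+}"
  by (rule finite_subset[OF _ dag(1)]) (auto dest: trancl_V)

lemma fin_anc: "finite {x. (x,a) \<in> A\<^sup>+}"
  by (rule finite_subset[OF _ dag(1)]) (auto dest: trancl_V)

lemma one_parent: "in_deg A a = 1 \<Longrightarrow> (p,a) \<in> A \<Longrightarrow> (q,a) \<in> A \<Longrightarrow> p = q"
proof -
  assume "in_deg A a = 1" "(p,a) \<in> A" "(q,a) \<in> A"
  then have "card {u. (u,a) \<in> A} = 1" unfolding in_deg_def by simp
  then obtain z where "{u. (u,a) \<in> A} = {z}" by (rule card_1_singletonE)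
  then show "p = q" using \<open>(p,a) \<in> A\<close> \<open>(q,a) \<in> A\<close> by (auto simp: set_eq_iff)
qed

lemma two_children: "out_deg A a \<ge> 2 \<Longrightarrow> \<exists>c1 c2. (a,c1) \<in> A \<and> (a,c2) \<in> A \<and> c1 \<noteq> c2"
proof -
  assume "out_deg A a \<ge> 2"
  then have "card {u. (a,u) \<in> A} \<ge> 2" by (simp add: out_deg_def)
  then have "{u. (a,u) \<in> A} \<noteq> {}" by (cases "{u. (a,u) \<in> A} = {}") auto
  then obtain c1 where c1: "(a,c1) \<in> A" by auto
  show ?thesis
  proof (rule ccontr)
    assume "\<not> ?thesis"
    then have "\<forall>c2. (a,c2) \<in> A \<longrightarrow> c2 = c1" using c1 by blast
    then have "{u. (a,u) \<in> A} \<subseteq> {c1}" by blast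
    then have "card {u. (a,u) \<in> A} \<le> card {c1}" by (intro card_mono) auto
    then have "card {u. (a,u) \<in> A} \<le> 1" by simp
    then show False using \<open>card {u. (a,u) \<in> A} \<ge> 2\<close> by simp
  qed
qed

lemma pos_parent: "in_deg A a \<noteq> 0 \<Longrightarrow> \<exists>p. (p,a) \<in> A"
  unfolding in_deg_def by (cases "{u. (u,a) \<in> A} = {}") auto

lemma pos_child: "out_deg A a \<noteq> 0 \<Longrightarrow> \<exists>p. (a,p) \<in> A"
  unfolding out_deg_def by (cases "{u. (a,u) \<in> A} = {}") auto

lemma leafX: "x \<in> X \<Longrightarrow> x \<in> V \<and> is_leaf A x"
  using leaves by blast

lemma leaf_noout: "x \<in> X \<Longrightarrow> (x,y) \<notin> A"
proof
  assume "x \<in> X" "(x,y) \<in> A"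
  then have "out_deg A x = 0" using leafX[of x] unfolding is_leaf_def by simp
  then have "{u. (x,u) \<in> A} = {}" using fin_ch unfolding out_deg_def by simp
  then show False using \<open>(x,y) \<in> A\<close> by auto
qed

lemma leaf_rtr: "x \<in> X \<Longrightarrow> (x,y) \<in> A\<^sup>* \<Longrightarrow> y = x"
  using leaf_noout by (auto elim: converse_rtranclE)

lemma desc_less: assumes "(t,c) \<in> A\<^sup>+" shows "card {x. (c,x) \<in> A\<^sup>+} < card {x. (t,x) \<in> A\<^sup>+}"
proof (rule psubset_card_mono[OF fin_desc])
  have "{x. (c,x) \<in> A\<^sup>+} \<subseteq> {x. (t,x) \<in> A\<^sup>+}"
    using assms trancl_trans[where x=t and y=c] by blast
  moreover have "c \<in> {x. (t,x) \<in> A\<^sup>+}" "c \<notin> {x. (c,x) \<in> A\<^sup>+}" using assms dag(3) by auto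
  ultimately show "{x. (c,x) \<in> A\<^sup>+} \<subset> {x. (t,x) \<in> A\<^sup>+}" by blast
qed

lemma anc_less: assumes "(c,t) \<in> A\<^sup>+" shows "card {x. (x,c) \<in> A\<^sup>+} < card {x. (x,t) \<in> A\<^sup>+}"
proof (rule psubset_card_mono[OF fin_anc])
  have "{x. (x,c) \<in> A\<^sup>+} \<subseteq> {x. (x,t) \<in> A\<^sup>+}"
    using assms trancl_trans[where y=c and z=t] by blast
  moreover have "c \<in> {x. (x,t) \<in> A\<^sup>+}" "c \<notin> {x. (x,c) \<in> A\<^sup>+}" using assms dag(3) by auto
  ultimately show "{x. (x,c) \<in> A\<^sup>+} \<subset> {x. (x,t) \<in> A\<^sup>+}" by blast
qed

lemma root_ex: "\<exists>r\<in>V. in_deg A r = 0 \<and> out_deg A r \<ge> 2 \<and> (\<forall>u\<in>V. in_deg A u = 0 \<longrightarrow> u = r) \<and>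
        (\<forall>u\<in>V. u \<noteq> r \<and> \<not> is_leaf A u \<longrightarrow> is_split A u \<or> is_hybrid A u) \<and> (\<forall>a\<in>V. (r,a) \<in> A\<^sup>*)"
proof -
  obtain r where r: "r\<in>V" "in_deg A r = 0" "out_deg A r \<ge> 2" "\<forall>u\<in>V. in_deg A u = 0 \<longrightarrow> u = r"
        "\<forall>u\<in>V. u \<noteq> r \<and> \<not> is_leaf A u \<longrightarrow> is_split A u \<or> is_hybrid A u"
    using phylo unfolding phylo_net_def by blast
  have "a \<in> V \<longrightarrow> (r,a) \<in> A\<^sup>*" for a
  proof (induction a rule: measure_induct_rule[of "\<lambda>a. card {x. (x,a) \<in> A\<^sup>+}"])
    case (less a)
    show ?case
    proof
      assume "a \<in> V"
      show "(r,a) \<in> A\<^sup>*"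
      proof (cases "a = r")
        case True then show ?thesis by simp
      next
        case False
        then have "in_deg A a \<noteq> 0" using r(4) \<open>a \<in> V\<close> by blast
        then obtain p where p: "(p,a) \<in> A" using pos_parent by blast
        have "p \<in> V" using p arc_V by blast
        moreover have "card {x. (x,p) \<in> A\<^sup>+} < card {x. (x,a) \<in> A\<^sup>+}" using anc_less[of p a] p by blast
        ultimately have "(r,p) \<in> A\<^sup>*" using less.IH by blast
        then show ?thesis using p by simp
      qed
    qed
  qed
  then show ?thesis using r by blast
qed

lemma Y_lemma:
  "(s,a) \<in> A\<^sup>* \<Longrightarrow> (s,b) \<in> A\<^sup>* \<Longrightarrow> (a,b) \<notin> A\<^sup>* \<Longrightarrow> (b,a) \<notin> A\<^sup>* \<Longrightarrow>
   \<exists>w pa pb. (s,w) \<in> A\<^sup>* \<and> dpath A w a pa \<and> dpath A w b pb \<and> set pa \<inter> set pb = {w}"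
proof (induction s rule: measure_induct_rule[of "\<lambda>s. card {x. (s,x) \<in> A\<^sup>+}"])
  case (less s)
  have "s \<noteq> a" using less.prems by auto
  then have "(s,a) \<in> A\<^sup>+" using less.prems by (meson rtrancl_eq_or_trancl)
  then obtain ca where ca: "(s,ca) \<in> A" "(ca,a) \<in> A\<^sup>*" by (meson tranclD)
  have "s \<noteq> b" using less.prems by auto
  then have "(s,b) \<in> A\<^sup>+" using less.prems by (meson rtrancl_eq_or_trancl)
  then obtain cb where cb: "(s,cb) \<in> A" "(cb,b) \<in> A\<^sup>*" by (meson tranclD)
  show ?case
  proof (cases "\<exists>c. (s,c) \<in> A \<and> (c,a) \<in> A\<^sup>* \<and> (c,b) \<in> A\<^sup>*")
    case True
    then obtain c where c: "(s,c) \<in> A" "(c,a) \<in> A\<^sup>*" "(c,b) \<in> A\<^sup>*" by blast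
    have "card {x. (c,x) \<in> A\<^sup>+} < card {x. (s,x) \<in> A\<^sup>+}" using desc_less[OF r_into_trancl[OF c(1)]] .
    from less.IH[OF this c(2) c(3) less.prems(3) less.prems(4)]
    obtain w pa pb where "(c,w) \<in> A\<^sup>*" "dpath A w a pa" "dpath A w b pb" "set pa \<inter> set pb = {w}"
      by blast
    moreover have "(s,w) \<in> A\<^sup>*" using c(1) \<open>(c,w) \<in> A\<^sup>*\<close> by (rule converse_rtrancl_into_rtrancl)
    ultimately show ?thesis by (intro exI[of _ w] exI[of _ pa] exI[of _ pb] conjI)
  next
    case False
    have nab1: "(ca,b) \<notin> A\<^sup>*"
    proof
      assume h: "(ca,b) \<in> A\<^sup>*"
      have "\<exists>c. (s,c) \<in> A \<and> (c,a) \<in> A\<^sup>* \<and> (c,b) \<in> A\<^sup>*" using ca h by (intro exI[of _ ca] conjI)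
      then show False using False by contradiction
    qed
    have nab2: "(cb,a) \<notin> A\<^sup>*"
    proof
      assume h: "(cb,a) \<in> A\<^sup>*"
      have "\<exists>c. (s,c) \<in> A \<and> (c,a) \<in> A\<^sup>* \<and> (c,b) \<in> A\<^sup>*" using cb h by (intro exI[of _ cb] conjI)
      then show False using False by contradiction
    qed
    obtain qa where qa: "dpath A ca a qa" using rtrancl_dpath[OF ca(2)] by blast
    obtain qb where qb: "dpath A cb b qb" using rtrancl_dpath[OF cb(2)] by blast
    have "qa \<noteq> []" "hd qa = ca" "qb \<noteq> []" "hd qb = cb" using qa qb unfolding dpath_def by simp_all
    then have pa: "dpath A s a (s#qa)" and pb: "dpath A s b (s#qb)" using qa ca qb cb by (simp_all add: dpath_Cons)
    have "s \<notin> set qa"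
    proof
      assume "s \<in> set qa" then have "(ca,s) \<in> A\<^sup>*" using dpath_set[OF qa] by simp
      then have "(s,s) \<in> A\<^sup>+" using ca(1) by (rule rtrancl_into_trancl2[rotated])
      then show False using dag(3) by simp
    qed
    moreover have "s \<notin> set qb"
    proof
      assume "s \<in> set qb" then have "(cb,s) \<in> A\<^sup>*" using dpath_set[OF qb] by simp
      then have "(s,s) \<in> A\<^sup>+" using cb(1) by (rule rtrancl_into_trancl2[rotated])
      then show False using dag(3) by simp
    qed
    moreover have "set qa \<inter> set qb = {}"
    proof (rule ccontr)
      assume "set qa \<inter> set qb \<noteq> {}"
      then obtain x where "x \<in> set qa" "x \<in> set qb" by blast
      then have "(ca,x) \<in> A\<^sup>*" "(x,b) \<in> A\<^sup>*" using dpath_set[OF qa] dpath_set[OF qb] by simp_all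
      then have "(ca,b) \<in> A\<^sup>*" by (rule rtrancl_trans)
      then show False using nab1 by contradiction
    qed
    ultimately have "set (s#qa) \<inter> set (s#qb) = {s}" by (simp add: set_eq_iff) blast
    moreover have "(s,s) \<in> A\<^sup>*" by simp
    ultimately show ?thesis using pa pb by (intro exI[of _ s] exI[of _ "s#qa"] exI[of _ "s#qb"] conjI)
  qed
qed

lemma no_adj_hybrids:
  assumes "(c,d) \<in> A" "is_hybrid A c" "is_hybrid A d" shows False
proof -
  let ?E = "uedges A"
  have cd: "c \<noteq> d"
  proof
    assume "c = d" then have "(c,c) \<in> A\<^sup>+" using assms(1) by simp
    then show False using dag(3) by simp
  qed
  have cV: "c \<in> V" "d \<in> V" using arc_V[OF assms(1)] by simp_all
  let ?R = "?E \<inter> {c,d} \<times> {c,d}"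
  have e: "(c,d) \<in> ?R" "(d,c) \<in> ?R" using assms(1) by (simp_all add: uedges_def)
  have conn: "\<forall>x\<in>{c,d}. \<forall>y\<in>{c,d}. (x, y) \<in> ?R\<^sup>*"
  proof (intro ballI)
    fix x y assume "x \<in> {c,d}" "y \<in> {c,d}"
    then have "x = y \<or> (x,y) = (c,d) \<or> (x,y) = (d,c)" by blast
    moreover have "(c,d) \<in> ?R\<^sup>*" "(d,c) \<in> ?R\<^sup>*" using r_into_rtrancl[OF e(1)] r_into_rtrancl[OF e(2)] by simp_all
    ultimately show "(x, y) \<in> ?R\<^sup>*" by (elim disjE) (simp_all only: prod.inject rtrancl.rtrancl_refl)
  qed
  have conn2: "\<forall>z\<in>{c,d}. connected_on ?E ({c,d} - {z})"
    unfolding connected_on_def by auto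
  have "connected_on ?E {c,d}" using conn unfolding connected_on_def by blast
  then have bS: "biconnected_on ?E {c,d}"
    unfolding biconnected_on_def using cd conn2 by simp
  let ?F = "{T. {c,d} \<subseteq> T \<and> T \<subseteq> V \<and> biconnected_on ?E T}"
  have "?F \<subseteq> Pow V" by blast
  then have finF: "finite ?F" using dag(1) by (simp add: finite_subset)
  have inF: "{c,d} \<in> ?F" using bS cV by simp
  obtain T where T: "T \<in> ?F" "\<forall>T'\<in>?F. T \<le> T' \<longrightarrow> T = T'"
    using finite_has_maximal2[OF finF inF] by blast
  have "biconnected_component V ?E T"
    unfolding biconnected_component_def
  proof (intro conjI allI impI)
    show "T \<subseteq> V" "biconnected_on ?E T" using T(1) by simp_all
    fix T' assume H: "T \<subset> T' \<and> T' \<subseteq> V"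
    show "\<not> biconnected_on ?E T'"
    proof
      assume "biconnected_on ?E T'"
      moreover have "{c,d} \<subseteq> T'" using H T(1) by auto
      ultimately have "T' \<in> ?F" using H by simp
      moreover have "T \<le> T'" using H by auto
      ultimately have "T = T'" using T(2) by simp
      then show False using H by simp
    qed
  qed
  then have "card {h \<in> T. is_hybrid A h} \<le> 1" by (rule lvl1)
  moreover have "{c,d} \<subseteq> {h \<in> T. is_hybrid A h}" using T(1) assms by simp
  moreover have "T \<subseteq> V" using T(1) by simp
  then have "finite T" using dag(1) by (rule finite_subset)
  then have "finite {h \<in> T. is_hybrid A h}" by simp
  ultimately have "card {c,d} \<le> 1" using card_mono[of "{h \<in> T. is_hybrid A h}" "{c,d}"] by linarith
  then show False using cd by simp
qed

end


lemma dpath_rtrancl: "dpath A s t q \<Longrightarrow> (s,t) \<in> A\<^sup>*"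
proof -
  assume H: "dpath A s t q"
  then have "t \<in> set q" unfolding dpath_def by (metis last_in_set)
  then show ?thesis using dpath_set[OF H] by simp
qed

lemma interior_set: "x \<in> interior q \<Longrightarrow> x \<in> set q"
  unfolding interior_def by (metis in_set_butlastD list.set_sel(2) tl_Nil)

context l1net
begin

lemma Y_disj: assumes "dpath A s t q" "dpath A s t' q'" "set q \<inter> set q' = {s}"
  shows "interior q \<inter> interior q' = {}"
proof (rule ccontr)
  assume "interior q \<inter> interior q' \<noteq> {}"
  then obtain x where x: "x \<in> interior q" "x \<in> interior q'" by blast
  have "x \<in> set q" "x \<in> set q'" using interior_set[OF x(1)] interior_set[OF x(2)] by simp_all
  then have "x = s" using assms(3) by blast
  moreover have "(s,x) \<in> A\<^sup>+" using dpath_interior[OF assms(1) x(1)] by simp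
  ultimately show False using dag(3) by simp
qed

lemma parent_pos: "(y,r) \<in> A \<Longrightarrow> in_deg A r \<noteq> 0"
  unfolding in_deg_def using fin_par[of r] by auto

end

locale cnet = l1net +
  fixes v u
  assumes vV: "v \<in> V" and vsplit: "is_split A v" and cut: "cut_arc V A (u,v)"
begin

lemma L1: assumes yx: "(y,x) \<in> A" and vx: "(v,x) \<in> A\<^sup>*" and vy: "(v,y) \<notin> A\<^sup>*" shows "x = v"
proof (rule ccontr)
  assume nx: "x \<noteq> v"
  obtain r where r: "r \<in> V" "\<forall>a\<in>V. (r,a) \<in> A\<^sup>*" using root_ex by blast
  define B where "B = A - {(u,v)}"
  define E where "E = uedges B"
  have EV: "E \<subseteq> V \<times> V" unfolding E_def B_def uedges_def using dag(2) by auto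
  have BE: "B \<subseteq> E" unfolding E_def uedges_def by auto
  have Econv: "E\<inverse> = E" unfolding E_def uedges_def by auto
  have BsE: "B\<^sup>* \<subseteq> E\<^sup>*" using BE by (rule rtrancl_mono)
  have sym: "(b,a) \<in> E\<^sup>*" if "(a,b) \<in> E\<^sup>*" for a b
  proof -
    have "(b,a) \<in> (E\<inverse>)\<^sup>*" using that by (rule rtrancl_converseI)
    then show ?thesis using Econv by simp
  qed
  have up: "(v,a) \<notin> A\<^sup>* \<longrightarrow> (r,a) \<in> B\<^sup>*" if "(r,a) \<in> A\<^sup>*" for a
    using that
  proof (induction rule: rtrancl_induct)
    case base then show ?case by simp
  next
    case (step b a)
    show ?case
    proof
      assume va: "(v,a) \<notin> A\<^sup>*"
      have "(v,b) \<notin> A\<^sup>*"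
      proof
        assume "(v,b) \<in> A\<^sup>*" then have "(v,a) \<in> A\<^sup>*" using step(2) by (rule rtrancl_into_rtrancl)
        then show False using va by contradiction
      qed
      then have rb: "(r,b) \<in> B\<^sup>*" using step(3) by simp
      have "a \<noteq> v" using va by auto
      then have "(b,a) \<in> B" unfolding B_def using step(2) by simp
      then show "(r,a) \<in> B\<^sup>*" using rb by (rule rtrancl_into_rtrancl[rotated])
    qed
  qed
  have down: "(v,a) \<in> B\<^sup>*" if "(v,a) \<in> A\<^sup>*" for a
    using that
  proof (induction rule: rtrancl_induct)
    case base then show ?case by simp
  next
    case (step b a)
    have "(b,a) \<noteq> (u,v)"
    proof
      assume "(b,a) = (u,v)"
      then have "(v,v) \<in> A\<^sup>+" using step(1,2) by (simp add: rtrancl_into_trancl1)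
      then show False using dag(3) by simp
    qed
    then have "(b,a) \<in> B" unfolding B_def using step(2) by simp
    then show ?case using step(3) by (rule rtrancl_into_rtrancl[rotated])
  qed
  have yV: "y \<in> V" using arc_V[OF yx] by simp
  have "(r,y) \<in> B\<^sup>*" using up[of y] r yV vy by simp
  then have ry: "(r,y) \<in> E\<^sup>*" using BsE by blast
  have "(y,x) \<in> B" unfolding B_def using yx nx by simp
  then have "(x,y) \<in> E" unfolding E_def uedges_def by simp
  moreover have "(v,x) \<in> E\<^sup>*" using down[OF vx] BsE by blast
  ultimately have "(v,y) \<in> E\<^sup>*" by (rule rtrancl_into_rtrancl[rotated])
  then have "(v,r) \<in> E\<^sup>*" using sym[OF ry] by (rule rtrancl_trans)
  then have rv: "(r,v) \<in> E\<^sup>*" by (rule sym)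
  have rall: "(r,a) \<in> E\<^sup>*" if "a \<in> V" for a
  proof (cases "(v,a) \<in> A\<^sup>*")
    case True
    then have "(v,a) \<in> E\<^sup>*" using down BsE by blast
    then show ?thesis using rv by (rule rtrancl_trans[rotated])
  next
    case False
    then have "(r,a) \<in> B\<^sup>*" using up[of a] r that by simp
    then show ?thesis using BsE by blast
  qed
  have "E \<inter> V \<times> V = E" using EV by blast
  moreover have "\<forall>a\<in>V. \<forall>b\<in>V. (a,b) \<in> E\<^sup>*"
  proof (intro ballI)
    fix a b assume "a \<in> V" "b \<in> V"
    then have "(a,r) \<in> E\<^sup>*" "(r,b) \<in> E\<^sup>*" using rall sym by blast+
    then show "(a,b) \<in> E\<^sup>*" by (rule rtrancl_trans)
  qed
  ultimately have "connected_on (uedges (A - {(u,v)})) V"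
    unfolding connected_on_def E_def B_def by simp
  then show False using cut unfolding cut_arc_def by simp
qed

lemma v_notX: "v \<notin> X"
proof
  assume "v \<in> X"
  then have "out_deg A v = 0" using leafX unfolding is_leaf_def by simp
  then show False using vsplit unfolding is_split_def by simp
qed

lemma cross_set: "dpath A s t q \<Longrightarrow> (v,s) \<notin> A\<^sup>* \<Longrightarrow> (v,t) \<in> A\<^sup>* \<Longrightarrow> v \<in> set q"
proof (induction q arbitrary: s)
  case Nil then show ?case by (simp add: dpath_def)
next
  case (Cons y q)
  show ?case
  proof (cases "q = []")
    case True then show ?thesis using Cons.prems by (auto simp: dpath_Cons)
  next
    case False
    then have a: "(s, hd q) \<in> A" "dpath A (hd q) t q" "y = s" using Cons.prems by (auto simp: dpath_Cons)
    show ?thesis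
    proof (cases "(v, hd q) \<in> A\<^sup>*")
      case True
      then have "hd q = v" using L1[OF a(1) True Cons.prems(2)] by simp
      then show ?thesis using False by (metis hd_in_set list.set_intros(2))
    next
      case False
      then show ?thesis using Cons.IH[OF a(2) False Cons.prems(3)] by simp
    qed
  qed
qed

lemma cross: assumes "dpath A s t q" "(v,s) \<notin> A\<^sup>*" "(v,t) \<in> A\<^sup>*" "t \<noteq> v" shows "v \<in> interior q"
proof (rule interiorI)
  show "v \<in> set q" using cross_set assms by blast
  have "hd q = s" "last q = t" using assms(1) unfolding dpath_def by simp_all
  moreover have "v \<noteq> s" using assms(2) by auto
  ultimately show "v \<noteq> hd q" "v \<noteq> last q" using assms(4) by simp_all
qed

lemma partB: assumes va: "(v,a) \<in> A\<^sup>*" and vc: "(v,c) \<in> A\<^sup>*" and vb: "(v,b) \<notin> A\<^sup>*"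
  and aX: "a \<in> X" and cX: "c \<in> X"
  shows "\<not> triplet_consistent V A a b c"
proof
  assume "triplet_consistent V A a b c"
  then obtain p w pc pw pa pb where P: "dpath A p c pc" "dpath A p w pw" "dpath A w a pa" "dpath A w b pb"
     "interior pc \<inter> interior pa = {}"
    unfolding triplet_consistent_def by blast
  have "(w,b) \<in> A\<^sup>*" using dpath_rtrancl[OF P(4)] .
  then have vw: "(v,w) \<notin> A\<^sup>*" using vb rtrancl_trans by metis
  have "(p,w) \<in> A\<^sup>*" using dpath_rtrancl[OF P(2)] .
  then have vp: "(v,p) \<notin> A\<^sup>*" using vw rtrancl_trans by metis
  have "c \<noteq> v" "a \<noteq> v" using v_notX aX cX by auto
  then have "v \<in> interior pc" "v \<in> interior pa" using cross[OF P(1) vp vc] cross[OF P(3) vw va] by simp_all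
  then show False using P(5) by blast
qed

lemma partA: assumes va: "(v,a) \<in> A\<^sup>*" and vb: "(v,b) \<in> A\<^sup>*" and vc: "(v,c) \<notin> A\<^sup>*"
  and aX: "a \<in> X" and bX: "b \<in> X" and cX: "c \<in> X" and ab: "a \<noteq> b"
  shows "triplet_consistent V A a b c"
proof -
  have "(a,b) \<notin> A\<^sup>*" "(b,a) \<notin> A\<^sup>*" using leaf_rtr aX bX ab by blast+
  then obtain w pa pb where W: "(v,w) \<in> A\<^sup>*" "dpath A w a pa" "dpath A w b pb" "set pa \<inter> set pb = {w}"
    using Y_lemma[OF va vb] by blast
  obtain r where r: "r \<in> V" "\<forall>a\<in>V. (r,a) \<in> A\<^sup>*" using root_ex by blast
  have wV: "w \<in> V" using rtrancl_V[OF W(1) vV] .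
  have cV: "c \<in> V" using leafX cX by simp
  have rc: "(r,c) \<in> A\<^sup>*" "(r,w) \<in> A\<^sup>*" using r cV wV by simp_all
  have wc: "(w,c) \<notin> A\<^sup>*"
  proof
    assume "(w,c) \<in> A\<^sup>*" then have "(v,c) \<in> A\<^sup>*" using W(1) by (rule rtrancl_trans[rotated])
    then show False using vc by contradiction
  qed
  have cw: "(c,w) \<notin> A\<^sup>*"
  proof
    assume "(c,w) \<in> A\<^sup>*" then have "w = c" using leaf_rtr cX by blast
    then show False using W(1) vc by simp
  qed
  obtain p pc pw where Q: "(r,p) \<in> A\<^sup>*" "dpath A p c pc" "dpath A p w pw" "set pc \<inter> set pw = {p}"
    using Y_lemma[OF rc(1) rc(2) cw wc] by blast
  have pV: "p \<in> V" using rtrancl_V[OF Q(1) r(1)] .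
  have pw: "p \<noteq> w"
  proof
    assume "p = w" then show False using dpath_rtrancl[OF Q(2)] wc by simp
  qed
  have d1: "interior pc \<inter> interior pw = {}" using Y_disj[OF Q(2) Q(3) Q(4)] .
  have d6: "interior pa \<inter> interior pb = {}" using Y_disj[OF W(2) W(3) W(4)] .
  have d2: "interior pc \<inter> interior pq = {}" if "dpath A w z pq" for z pq
  proof (rule ccontr)
    assume "interior pc \<inter> interior pq \<noteq> {}"
    then obtain x where x: "x \<in> interior pc" "x \<in> interior pq" by blast
    have "(x,c) \<in> A\<^sup>+" using dpath_interior[OF Q(2) x(1)] by simp
    moreover have "(w,x) \<in> A\<^sup>+" using dpath_interior[OF that x(2)] by simp
    ultimately have "(w,c) \<in> A\<^sup>+" by (rule trancl_trans[rotated])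
    then show False using wc by (simp add: trancl_into_rtrancl)
  qed
  have d4: "interior pw \<inter> interior pq = {}" if "dpath A w z pq" for z pq
  proof (rule ccontr)
    assume "interior pw \<inter> interior pq \<noteq> {}"
    then obtain x where x: "x \<in> interior pw" "x \<in> interior pq" by blast
    have "(x,w) \<in> A\<^sup>+" using dpath_interior[OF Q(3) x(1)] by simp
    moreover have "(w,x) \<in> A\<^sup>+" using dpath_interior[OF that x(2)] by simp
    ultimately have "(w,w) \<in> A\<^sup>+" by (rule trancl_trans[rotated])
    then show False using dag(3) by simp
  qed
  show ?thesis unfolding triplet_consistent_def
    using pV wV pw Q(2) Q(3) W(2) W(3) d1 d2[OF W(2)] d2[OF W(3)] d4[OF W(2)] d4[OF W(3)] d6
    by blast
qed

end


context cnet
begin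

lemma notX: "cluster A X v \<noteq> X"
proof
  assume eq: "cluster A X v = X"
  then have allX: "\<And>x. x \<in> X \<Longrightarrow> (v,x) \<in> A\<^sup>*" unfolding cluster_def by blast
  obtain r where r: "r\<in>V" "in_deg A r = 0" "out_deg A r \<ge> 2"
     "\<forall>u\<in>V. u \<noteq> r \<and> \<not> is_leaf A u \<longrightarrow> is_split A u \<or> is_hybrid A u"
    using root_ex by blast
  have rD: "(v,r) \<notin> A\<^sup>*"
  proof
    assume vr: "(v,r) \<in> A\<^sup>*"
    have "r \<noteq> v" using r(2) vsplit unfolding is_split_def by auto
    then have "(v,r) \<in> A\<^sup>+" using vr by (simp add: rtrancl_eq_or_trancl)
    then obtain y where "(y,r) \<in> A" by (meson tranclD2)
    then show False using parent_pos r(2) by blast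
  qed
  have rh: "\<not> is_hybrid A r" using r(2) unfolding is_hybrid_def by simp
  define P where "P x \<longleftrightarrow> x \<in> V \<and> (v,x) \<notin> A\<^sup>* \<and> \<not> is_hybrid A x" for x
  have "P r" unfolding P_def using r(1) rD rh by simp
  then obtain t where t: "P t" and tmin: "\<forall>y. P y \<longrightarrow> card {x. (t,x) \<in> A\<^sup>+} \<le> card {x. (y,x) \<in> A\<^sup>+}"
    using ex_has_least_nat[of P r "\<lambda>y. card {x. (y,x) \<in> A\<^sup>+}"] by blast
  have min: False if "(t,y) \<in> A\<^sup>+" "P y" for y
    using desc_less[OF that(1)] tmin that(2) by fastforce
  have tV: "t \<in> V" and tD: "(v,t) \<notin> A\<^sup>*" and th: "\<not> is_hybrid A t" using t unfolding P_def by simp_all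
  have tl: "\<not> is_leaf A t"
  proof
    assume "is_leaf A t" then have "t \<in> X" using leaves tV by blast
    then show False using allX tD by blast
  qed
  have "out_deg A t \<ge> 2"
  proof (cases "t = r")
    case True then show ?thesis using r(3) by simp
  next
    case False
    then have "is_split A t" using r(4) tV tl th by blast
    then show ?thesis unfolding is_split_def by simp
  qed
  then obtain c1 c2 where c: "(t,c1) \<in> A" "(t,c2) \<in> A" "c1 \<noteq> c2" using two_children by blast
  have child: "c = v \<or> (is_hybrid A c \<and> (c,v) \<in> A)" if tc: "(t,c) \<in> A" for c
  proof (cases "(v,c) \<in> A\<^sup>*")
    case True then show ?thesis using L1[OF tc True tD] by simp
  next
    case False
    have cV: "c \<in> V" using arc_V[OF tc] by simp
    have ch: "is_hybrid A c"
    proof (rule ccontr)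
      assume "\<not> is_hybrid A c"
      then have "P c" unfolding P_def using cV False by simp
      then show False using min[OF r_into_trancl[OF tc]] by simp
    qed
    then have "out_deg A c \<noteq> 0" unfolding is_hybrid_def by simp
    then obtain d where cd: "(c,d) \<in> A" using pos_child by blast
    have dV: "d \<in> V" using arc_V[OF cd] by simp
    show ?thesis
    proof (cases "(v,d) \<in> A\<^sup>*")
      case True
      then have "d = v" using L1[OF cd True False] by simp
      then show ?thesis using ch cd by simp
    next
      case vd: False
      show ?thesis
      proof (cases "is_hybrid A d")
        case True then show ?thesis using no_adj_hybrids[OF cd ch] by simp
      next
        case nh: False
        then have "P d" unfolding P_def using dV vd by simp
        moreover have "(t,d) \<in> A\<^sup>+" using tc cd by simp
        ultimately show ?thesis using min by blast
      qed
    qed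
  qed
  have indeg: "in_deg A v = 1" using vsplit unfolding is_split_def by simp
  show False
  proof (cases "c1 = v")
    case True
    then have "is_hybrid A c2 \<and> (c2,v) \<in> A" using child[OF c(2)] c(3) by auto
    moreover have "(t,v) \<in> A" using c(1) True by simp
    ultimately have "t = c2" using one_parent[OF indeg] by blast
    then show False using th \<open>is_hybrid A c2 \<and> (c2,v) \<in> A\<close> by simp
  next
    case F1: False
    then have h1: "is_hybrid A c1 \<and> (c1,v) \<in> A" using child[OF c(1)] by auto
    show False
    proof (cases "c2 = v")
      case True
      have "(t,v) \<in> A" using c(2) True by simp
      then have "t = c1" using one_parent[OF indeg] h1 by blast
      then show False using th h1 by simp
    next
      case False
      then have "is_hybrid A c2 \<and> (c2,v) \<in> A" using child[OF c(2)] by auto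
      then have "c1 = c2" using one_parent[OF indeg] h1 by blast
      then show False using c(3) by simp
    qed
  qed
qed

end

theorem mainTheorem6:
  fixes X V V' :: "'v set" and A A' :: "('v \<times> 'v) set" and v v' :: 'v
  assumes "finite X" and "card X \<ge> 3"
    and "binary_level1_net V A X" and "binary_level1_net V' A' X"
    and "triplets V A X \<subseteq> triplets V' A' X"
    and "v \<in> V" and "is_split A v" and "\<exists>u. cut_arc V A (u, v)"
    and "v' \<in> V'" and "is_split A' v'" and "\<exists>u. cut_arc V' A' (u, v')"
  shows "cluster A X v \<inter> cluster A' X v' \<in> {{}, cluster A X v, cluster A' X v'}
    \<and> (cluster A X v \<subset> cluster A' X v' \<longrightarrow>
         \<not> maximal_SN_set (triplets V A X) X (cluster A X v))"
proof -
  obtain u where u: "cut_arc V A (u, v)" using assms(8) by blast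
  obtain u' where u': "cut_arc V' A' (u', v')" using assms(11) by blast
  interpret N: cnet V A X v u
    using assms(3,6,7) u by (intro cnet.intro l1net.intro cnet_axioms.intro)
  interpret N': cnet V' A' X v' u'
    using assms(4,9,10) u' by (intro cnet.intro l1net.intro cnet_axioms.intro)
  let ?C = "cluster A X v" and ?C' = "cluster A' X v'"
  have memC: "x \<in> ?C \<longleftrightarrow> x \<in> X \<and> (v,x) \<in> A\<^sup>*" for x unfolding cluster_def by simp
  have memC': "x \<in> ?C' \<longleftrightarrow> x \<in> X \<and> (v',x) \<in> A'\<^sup>*" for x unfolding cluster_def by simp
  have noB: "(x,y,z) \<notin> triplets V A X" if "x \<in> ?C'" "z \<in> ?C'" "y \<notin> ?C'" for x y z
  proof
    assume "(x,y,z) \<in> triplets V A X"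
    then have T: "(x,y,z) \<in> triplets V' A' X" using assms(5) by blast
    then have "y \<in> X" "triplet_consistent V' A' x y z" unfolding triplets_def by simp_all
    moreover have "(v',y) \<notin> A'\<^sup>*" using that(3) memC' \<open>y \<in> X\<close> by simp
    ultimately show False using N'.partB that(1,2) memC' by blast
  qed
  have P1: "?C \<inter> ?C' \<in> {{}, ?C, ?C'}"
  proof (rule ccontr)
    assume H: "?C \<inter> ?C' \<notin> {{}, ?C, ?C'}"
    then obtain a where a: "a \<in> ?C" "a \<in> ?C'" by blast
    from H obtain b where b: "b \<in> ?C" "b \<notin> ?C'" by blast
    from H obtain c where c: "c \<in> ?C'" "c \<notin> ?C" by blast
    have d: "a \<noteq> b" "a \<noteq> c" "b \<noteq> c" using a b c by auto
    have X: "a \<in> X" "b \<in> X" "c \<in> X" using a b c memC memC' by auto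
    have "(v,a) \<in> A\<^sup>*" "(v,b) \<in> A\<^sup>*" "(v,c) \<notin> A\<^sup>*" using a(1) b(1) c(2) memC X by auto
    then have "triplet_consistent V A a b c"
      using N.partA X d(1) by blast
    then have "(a,b,c) \<in> triplets V A X" using d X unfolding triplets_def by simp
    then show False using noB[OF a(2) c(1) b(2)] by simp
  qed
  have P2: "\<not> maximal_SN_set (triplets V A X) X ?C" if sub: "?C \<subset> ?C'"
  proof
    assume "maximal_SN_set (triplets V A X) X ?C"
    then have nT: "\<not> (SN_set (triplets V A X) X ?C' \<and> ?C' \<noteq> X \<and> ?C \<subset> ?C')"
      unfolding maximal_SN_set_def by blast
    have "?C' \<subseteq> X" unfolding cluster_def by blast
    then have "SN_set (triplets V A X) X ?C'" unfolding SN_set_def using noB by blast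
    then show False using nT N'.notX sub by blast
  qed
  show ?thesis using P1 P2 by blast
qed


end
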